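(* Let $(\mu_z^\varepsilon)_{z\in V,\varepsilon\in[0,1]}$ be a time-affine random walk on $\mathcal G$. Then for every pair of distinct vertices $x,y$, the function $\varepsilon\mapsto {}^{\mathcal O}\mathrm{Ric}_\varepsilon(x,y)$ is concave on $[0,1]$.
   Context: $\mathcal G$ is a locally finite graph with vertex set $V$, and $\mathrm d$ is a distance on $V$ such that $(V,\mathrm d)$ is a complete metric space. A random walk is a family of probability measures $\mu_z^\varepsilon$ on $V$ ($z\in V$, $\varepsilon\in[0,1]$), each with finite first moment, continuous in $\varepsilon$, with $\mu_z^0=\delta_z$. It is time-affine if for all $x,y\in V$ the function $\varepsilon\mapsto\mu_x^\varepsilon(y)$ is affine. $\mathcal W_1$ denotes the $L^1$-Wasserstein distance with respect to $\mathrm d$: $\mathcal W_1(\mu,\nu)=\inf_q\sum_{u,v}\mathrm d(u,v)q(u,v)$ over couplings $q$ of $\mu,\nu$. The discrete-time Ollivier–Ricci curvature is ${}^{\mathcal O}\mathrm{Ric}_\varepsilon(x,y):=1-\mathcal W_1(\mu_x^\varepsilon,\mu_y^\varepsilon)/\mathrm d(x,y)$. *)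

theory Defs
  imports "HOL-Analysis.Analysis" "HOL-Probability.Probability"
begin

definition locally_finite_graph :: "('v \<Rightarrow> 'v \<Rightarrow> bool) \<Rightarrow> bool" where
  "locally_finite_graph E \<longleftrightarrow>
     (\<forall>x y. E x y \<longrightarrow> E y x) \<and> (\<forall>x. \<not> E x x) \<and> (\<forall>x. finite {y. E x y})"

definition couplings :: "'v pmf \<Rightarrow> 'v pmf \<Rightarrow> ('v \<times> 'v) pmf set" where
  "couplings \<mu> \<nu> = {q. map_pmf fst q = \<mu> \<and> map_pmf snd q = \<nu>}"

text \<open>L1-Wasserstein distance: infimum over couplings q of sum_{u,v} d(u,v) q(u,v)
  (computed in [0,\<infinity>] and converted to a real; finite under finite first moments).\<close>
definition W1 :: "('v \<Rightarrow> 'v \<Rightarrow> real) \<Rightarrow> 'v pmf \<Rightarrow> 'v pmf \<Rightarrow> real" where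
  "W1 d \<mu> \<nu> = enn2real (INF q\<in>couplings \<mu> \<nu>.
      \<integral>\<^sup>+ p. ennreal (d (fst p) (snd p)) \<partial>measure_pmf q)"

definition random_walk :: "('v \<Rightarrow> 'v \<Rightarrow> real) \<Rightarrow> ('v \<Rightarrow> real \<Rightarrow> 'v pmf) \<Rightarrow> bool" where
  "random_walk d \<mu> \<longleftrightarrow>
     (\<forall>z. \<forall>\<epsilon>\<in>{0..1}. (\<integral>\<^sup>+ v. ennreal (d z v) \<partial>measure_pmf (\<mu> z \<epsilon>)) < \<infinity>) \<and>
     (\<forall>z y. continuous_on {0..1} (\<lambda>\<epsilon>. pmf (\<mu> z \<epsilon>) y)) \<and>
     (\<forall>z. \<mu> z 0 = return_pmf z)"

definition time_affine :: "('v \<Rightarrow> real \<Rightarrow> 'v pmf) \<Rightarrow> bool" where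
  "time_affine \<mu> \<longleftrightarrow>
     (\<forall>x y. \<exists>a b. \<forall>\<epsilon>\<in>{0..1}. pmf (\<mu> x \<epsilon>) y = a + b * \<epsilon>)"

definition ORic :: "('v \<Rightarrow> 'v \<Rightarrow> real) \<Rightarrow> ('v \<Rightarrow> real \<Rightarrow> 'v pmf) \<Rightarrow> real \<Rightarrow> 'v \<Rightarrow> 'v \<Rightarrow> real" where
  "ORic d \<mu> \<epsilon> x y = 1 - W1 d (\<mu> x \<epsilon>) (\<mu> y \<epsilon>) / d x y"

end

theory Submission
  imports Defs
begin

definition mixp :: "real \<Rightarrow> 'a pmf \<Rightarrow> 'a pmf \<Rightarrow> 'a pmf" where
  "mixp t a b = bind_pmf (bernoulli_pmf t) (\<lambda>c. if c then a else b)"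

lemma pmf_mixp:
  assumes "0 \<le> t" "t \<le> 1"
  shows "pmf (mixp t a b) i = t * pmf a i + (1 - t) * pmf b i"
  using assms by (simp add: mixp_def pmf_bind)

lemma map_mixp: "map_pmf f (mixp t a b) = mixp t (map_pmf f a) (map_pmf f b)"
  unfolding mixp_def map_bind_pmf by (intro bind_pmf_cong) auto

lemma nn_integral_mixp:
  assumes "0 \<le> t" "t \<le> 1"
  shows "(\<integral>\<^sup>+x. f x \<partial>measure_pmf (mixp t a b)) =
     ennreal t * (\<integral>\<^sup>+x. f x \<partial>measure_pmf a) + ennreal (1 - t) * (\<integral>\<^sup>+x. f x \<partial>measure_pmf b)"
  using assms by (simp add: mixp_def mult.commute)

lemma couplings_mixp:
  assumes "q1 \<in> couplings p1 r1" "q2 \<in> couplings p2 r2"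
  shows "mixp t q1 q2 \<in> couplings (mixp t p1 p2) (mixp t r1 r2)"
  using assms by (simp add: couplings_def map_mixp)

lemma W1_mix:
  fixes d :: "'v \<Rightarrow> 'v \<Rightarrow> real"
  assumes t: "0 \<le> t" "t \<le> 1"
  defines "C \<equiv> (\<lambda>q. \<integral>\<^sup>+ p. ennreal (d (fst p) (snd p)) \<partial>measure_pmf q)"
  assumes f1: "(INF q\<in>couplings p1 r1. C q) \<noteq> \<infinity>"
    and f2: "(INF q\<in>couplings p2 r2. C q) \<noteq> \<infinity>"
  shows "(INF q\<in>couplings (mixp t p1 p2) (mixp t r1 r2). C q) \<le>
     ennreal t * (INF q\<in>couplings p1 r1. C q) + ennreal (1 - t) * (INF q\<in>couplings p2 r2. C q)"
    (is "?I \<le> ennreal t * ?I1 + ennreal (1 - t) * ?I2")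
proof (rule ennreal_le_epsilon)
  fix e :: real assume e: "0 < e"
  obtain q1 where q1: "q1 \<in> couplings p1 r1" "C q1 < ?I1 + e"
    using INF_approx_ennreal[OF e refl f1] by blast
  obtain q2 where q2: "q2 \<in> couplings p2 r2" "C q2 < ?I2 + e"
    using INF_approx_ennreal[OF e refl f2] by blast
  have "?I \<le> C (mixp t q1 q2)"
    by (rule INF_lower) (rule couplings_mixp[OF q1(1) q2(1)])
  also have "\<dots> = ennreal t * C q1 + ennreal (1 - t) * C q2"
    unfolding C_def by (rule nn_integral_mixp[OF t])
  also have "\<dots> \<le> ennreal t * (?I1 + e) + ennreal (1 - t) * (?I2 + e)"
    using q1(2) q2(2) by (intro add_mono mult_left_mono) auto
  also have "\<dots> = ennreal t * ?I1 + ennreal (1 - t) * ?I2 + (ennreal t * e + ennreal (1 - t) * e)"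
    by (simp add: distrib_left ac_simps)
  also have "ennreal t * e + ennreal (1 - t) * e = ennreal e"
    using t e by (simp flip: ennreal_mult ennreal_plus add: algebra_simps)
  finally show "?I \<le> ennreal t * ?I1 + ennreal (1 - t) * ?I2 + ennreal e" .
qed


lemma cost_bound:
  fixes d :: "'v \<Rightarrow> 'v \<Rightarrow> real"
  assumes M: "Metric_space UNIV d" and q: "q \<in> couplings p r"
  shows "(\<integral>\<^sup>+ u. ennreal (d (fst u) (snd u)) \<partial>measure_pmf q) \<le>
    (\<integral>\<^sup>+ v. ennreal (d z v) \<partial>measure_pmf p) + ennreal (d z w) + (\<integral>\<^sup>+ v. ennreal (d w v) \<partial>measure_pmf r)"
proof -
  have tri: "d a b \<le> d z a + d z w + d w b" for a b
  proof -
    have "d a b \<le> d a z + d z b" using Metric_space.triangle[OF M] by blast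
    also have "d z b \<le> d z w + d w b" using Metric_space.triangle[OF M] by blast
    finally show ?thesis using Metric_space.commute[OF M, of a z] by simp
  qed
  have nn: "0 \<le> d a b" for a b using Metric_space.nonneg[OF M] by blast
  have pt: "ennreal (d a b) \<le> ennreal (d z a) + ennreal (d z w) + ennreal (d w b)" for a b
  proof -
    have "ennreal (d a b) \<le> ennreal (d z a + d z w + d w b)" by (rule ennreal_leI) (rule tri)
    also have "\<dots> = ennreal (d z a + d z w) + ennreal (d w b)"
      by (rule ennreal_plus) (use nn in \<open>auto intro: add_nonneg_nonneg\<close>)
    also have "ennreal (d z a + d z w) = ennreal (d z a) + ennreal (d z w)"
      by (rule ennreal_plus) (use nn in auto)
    finally show ?thesis .
  qed
  have qp: "map_pmf fst q = p" "map_pmf snd q = r" using q unfolding couplings_def by auto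
  have "(\<integral>\<^sup>+ u. ennreal (d (fst u) (snd u)) \<partial>measure_pmf q) \<le>
     (\<integral>\<^sup>+ u. ennreal (d z (fst u)) + ennreal (d z w) + ennreal (d w (snd u)) \<partial>measure_pmf q)"
    by (rule nn_integral_mono) (rule pt)
  also have "\<dots> = (\<integral>\<^sup>+ u. ennreal (d z (fst u)) + ennreal (d z w) \<partial>measure_pmf q)
      + (\<integral>\<^sup>+ u. ennreal (d w (snd u)) \<partial>measure_pmf q)"
    by (rule nn_integral_add) auto
  also have "(\<integral>\<^sup>+ u. ennreal (d z (fst u)) + ennreal (d z w) \<partial>measure_pmf q) =
      (\<integral>\<^sup>+ u. ennreal (d z (fst u)) \<partial>measure_pmf q) + (\<integral>\<^sup>+ u. ennreal (d z w) \<partial>measure_pmf q)"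
    by (rule nn_integral_add) auto
  also have "(\<integral>\<^sup>+ u. ennreal (d z (fst u)) \<partial>measure_pmf q) = (\<integral>\<^sup>+ v. ennreal (d z v) \<partial>measure_pmf (map_pmf fst q))"
    by (rule nn_integral_map_pmf[symmetric])
  also have "(\<integral>\<^sup>+ u. ennreal (d w (snd u)) \<partial>measure_pmf q) = (\<integral>\<^sup>+ v. ennreal (d w v) \<partial>measure_pmf (map_pmf snd q))"
    by (rule nn_integral_map_pmf[symmetric])
  also have "(\<integral>\<^sup>+ u. ennreal (d z w) \<partial>measure_pmf q) = ennreal (d z w)"
    by (simp add: measure_pmf.emeasure_space_1)
  finally show ?thesis unfolding qp .
qed

lemma aux_ineq:
  fixes A A1 A2 D t :: real
  assumes "A / D \<le> (1 - t) * (A1 / D) + t * (A2 / D)"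
  shows "- (1 - A / D) \<le> (1 - t) * - (1 - A1 / D) + t * - (1 - A2 / D)"
proof -
  have "(1 - t) * - (1 - A1 / D) + t * - (1 - A2 / D) = -1 + ((1 - t) * (A1 / D) + t * (A2 / D))"
    by (simp add: algebra_simps)
  then show ?thesis using assms by linarith
qed

theorem mainTheorem4:
  fixes E :: "'v \<Rightarrow> 'v \<Rightarrow> bool"
    and d :: "'v \<Rightarrow> 'v \<Rightarrow> real"
    and \<mu> :: "'v \<Rightarrow> real \<Rightarrow> 'v pmf"
  assumes "locally_finite_graph E"
    and "Metric_space UNIV d"
    and "Metric_space.mcomplete UNIV d"
    and "random_walk d \<mu>"
    and "time_affine \<mu>"
    and "x \<noteq> y"
  shows "concave_on {0..1} (\<lambda>\<epsilon>. ORic d \<mu> \<epsilon> x y)"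
proof -
  note M = assms(2)
  define C where "C \<equiv> (\<lambda>q. \<integral>\<^sup>+ p. ennreal (d (fst p) (snd p)) \<partial>measure_pmf q)"
  define I where "I \<equiv> (\<lambda>e. INF q\<in>couplings (\<mu> x e) (\<mu> y e). C q)"
  have dpos: "d x y > 0"
    using Metric_space.nonneg[OF M, of x y] Metric_space.zero[OF M, of x y] assms(6) by auto
  have fm: "(\<integral>\<^sup>+ v. ennreal (d z v) \<partial>measure_pmf (\<mu> z e)) < \<infinity>" if "e \<in> {0..1}" for z e
    using assms(4) that unfolding random_walk_def by blast
  have fin: "I e \<noteq> \<infinity>" if e: "e \<in> {0..1}" for e
  proof -
    have "pair_pmf (\<mu> x e) (\<mu> y e) \<in> couplings (\<mu> x e) (\<mu> y e)"
      by (simp add: couplings_def map_fst_pair_pmf map_snd_pair_pmf)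
    then have "I e \<le> C (pair_pmf (\<mu> x e) (\<mu> y e))" unfolding I_def by (rule INF_lower)
    also have "\<dots> \<le> (\<integral>\<^sup>+ v. ennreal (d x v) \<partial>measure_pmf (\<mu> x e)) + ennreal (d x y) + (\<integral>\<^sup>+ v. ennreal (d y v) \<partial>measure_pmf (\<mu> y e))"
      unfolding C_def by (rule cost_bound[OF M]) (simp add: couplings_def map_fst_pair_pmf map_snd_pair_pmf)
    also have "\<dots> < \<infinity>" using fm[OF e, of x] fm[OF e, of y] by simp
    finally show ?thesis by simp
  qed
  have mix: "\<mu> z ((1 - t) * e1 + t * e2) = mixp (1 - t) (\<mu> z e1) (\<mu> z e2)"
    if "e1 \<in> {0..1}" "e2 \<in> {0..1}" "0 \<le> t" "t \<le> 1" for z e1 e2 t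
  proof (rule pmf_eqI)
    fix i
    obtain a b where ab: "\<forall>\<epsilon>\<in>{0..1}. pmf (\<mu> z \<epsilon>) i = a + b * \<epsilon>"
      using assms(5) unfolding time_affine_def by blast
    have "(1 - t) * e1 + t * e2 \<in> {0..1}"
    proof -
      have "(1 - t) * e1 + t * e2 \<le> (1 - t) * 1 + t * 1"
        using that by (intro add_mono mult_left_mono) auto
      moreover have "0 \<le> (1 - t) * e1 + t * e2" using that by auto
      ultimately show ?thesis by simp
    qed
    then have "pmf (\<mu> z ((1 - t) * e1 + t * e2)) i = a + b * ((1 - t) * e1 + t * e2)" using ab by blast
    moreover have "pmf (\<mu> z e1) i = a + b * e1" "pmf (\<mu> z e2) i = a + b * e2" using ab that by auto
    ultimately show "pmf (\<mu> z ((1 - t) * e1 + t * e2)) i = pmf (mixp (1 - t) (\<mu> z e1) (\<mu> z e2)) i"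
      using that by (simp add: pmf_mixp[of "1 - t"]) (simp add: algebra_simps)
  qed
  have W: "W1 d (\<mu> x e) (\<mu> y e) = enn2real (I e)" for e
    unfolding W1_def I_def C_def ..
  have conv: "enn2real (I ((1 - t) * e1 + t * e2)) \<le> (1 - t) * enn2real (I e1) + t * enn2real (I e2)"
    if "e1 \<in> {0..1}" "e2 \<in> {0..1}" "0 \<le> t" "t \<le> 1" for e1 e2 t
  proof -
    have "I ((1 - t) * e1 + t * e2) \<le> ennreal (1 - t) * I e1 + ennreal (1 - (1 - t)) * I e2"
      unfolding I_def mix[OF that] mix[OF that, of y] C_def
      by (rule W1_mix) (use that fin in \<open>auto simp: I_def C_def\<close>)
    also have "\<dots> = ennreal ((1 - t) * enn2real (I e1) + t * enn2real (I e2))"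
    proof -
      define a1 where "a1 = enn2real (I e1)"
      define a2 where "a2 = enn2real (I e2)"
      have "I e1 \<noteq> top" using fin[OF that(1)] by simp
      then have l1: "I e1 < top" by (rule less_top[THEN iffD1])
      have "I e2 \<noteq> top" using fin[OF that(2)] by simp
      then have l2: "I e2 < top" by (rule less_top[THEN iffD1])
      have h: "I e1 = ennreal a1" "I e2 = ennreal a2"
        unfolding a1_def a2_def by (rule ennreal_enn2real[OF l1, symmetric], rule ennreal_enn2real[OF l2, symmetric])
      have "0 \<le> a1" "0 \<le> a2" unfolding a1_def a2_def by (simp_all add: enn2real_nonneg)
      note nn = this
      have tt: "1 - (1 - t) = t" by simp
      have m1: "ennreal (1 - t) * ennreal a1 = ennreal ((1 - t) * a1)"
        using nn that by (intro ennreal_mult[symmetric]) auto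
      have m2: "ennreal t * ennreal a2 = ennreal (t * a2)"
        using nn that by (intro ennreal_mult[symmetric]) auto
      have p: "ennreal ((1 - t) * a1) + ennreal (t * a2) = ennreal ((1 - t) * a1 + t * a2)"
        using nn that by (intro ennreal_plus[symmetric]) auto
      show ?thesis unfolding a1_def[symmetric] a2_def[symmetric] unfolding h tt m1 m2 p ..
    qed
    finally have "enn2real (I ((1 - t) * e1 + t * e2)) \<le> enn2real (ennreal ((1 - t) * enn2real (I e1) + t * enn2real (I e2)))"
      by (rule enn2real_mono) simp
    also have "\<dots> = (1 - t) * enn2real (I e1) + t * enn2real (I e2)"
      using that by (intro enn2real_ennreal add_nonneg_nonneg mult_nonneg_nonneg enn2real_nonneg) auto
    finally show ?thesis .
  qed
  show ?thesis
    unfolding concave_on_def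
  proof (rule convex_onI)
    fix t e1 e2 :: real
    assume t: "0 < t" "t < 1" and e: "e1 \<in> {0..1}" "e2 \<in> {0..1}"
    have c: "enn2real (I ((1 - t) * e1 + t * e2)) / d x y \<le> ((1 - t) * enn2real (I e1) + t * enn2real (I e2)) / d x y"
      using conv[OF e, of t] t dpos by (intro divide_right_mono) auto
    then show "- ORic d \<mu> ((1 - t) *\<^sub>R e1 + t *\<^sub>R e2) x y \<le> (1 - t) * - ORic d \<mu> e1 x y + t * - ORic d \<mu> e2 x y"
    proof -
      have sc: "(1 - t) *\<^sub>R e1 + t *\<^sub>R e2 = (1 - t) * e1 + t * e2" by simp
      have "((1 - t) * enn2real (I e1) + t * enn2real (I e2)) / d x y
          = (1 - t) * (enn2real (I e1) / d x y) + t * (enn2real (I e2) / d x y)"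
        by (simp add: add_divide_distrib)
      with c have "enn2real (I ((1 - t) * e1 + t * e2)) / d x y \<le> (1 - t) * (enn2real (I e1) / d x y) + t * (enn2real (I e2) / d x y)"
        by simp
      then show ?thesis unfolding ORic_def W sc by (rule aux_ineq)
    qed
  qed simp
qed

end
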